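(* Let $\gamma\in(0,2/f_{\max})$. The map $\mathcal Z:\mathbb S_c^{N\times N}\to\mathbb S_c^{N\times N}$, $\mathcal Z(\tilde h)=\mathcal Q\big(\gamma(\tilde X_R+j\tilde X_I)+\tilde h-\gamma(\mathcal F(\tilde h_R)+j\mathcal F(\tilde h_I)-\tfrac{1+j}{2})\big)$, is a contraction on the set of complex matrices in $\mathbb S_c^{N\times N}$ with respect to the Frobenius distance.
   Context: $M,N$ positive integers with $N>2M$; $g$ is a real $M\times M$ image with values in $[0,255]$ zero-padded to $N\times N$, $\tilde g=\tilde g_R+j\tilde g_I$ its $N\times N$ 2D-DFT $\mathfrak F(g)$; $\tilde X_R=\mathbb 1(\tilde g_R+W_R+d_R>0)-\tfrac12$, $\tilde X_I=\mathbb 1(\tilde g_I+W_I+d_I>0)-\tfrac12$ entrywise, where $W_R,W_I$ are independent zero-mean noise of known distribution symmetric about $0$ and $d_R,d_I$ independent AWGN dither, ensuring the total noise density is positive on the signal range. $\mathcal F$ is the CDF and $f$ the PDF of the total noise, applied entrywise; $f_{\max}$ is the maximum of $f$ over the region within the bounds of the signal. $\tilde h_R,\tilde h_I$ are the real and imaginary parts of $\tilde h$. $\mathbb S_c=\{a+jb:a,b\in[-255N^2,255N^2]\}$. $\mathcal Q(\tilde h)=\mathfrak F(\textsc{Clip}(\textsc{Proj}(\mathfrak F^{-1}(\tilde h))))$, where $\textsc{Proj}$ zeroes spatial-domain pixels outside the $M^2$-pixel image block and $\textsc{Clip}$ clips pixel values to $[0,255]$. *)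

theory Defs
  imports "HOL-Analysis.Analysis"
begin

text \<open>N x N complex matrices are represented as functions nat => nat => complex;
  only the entries with indices below N are meaningful.\<close>

type_synonym cmat = "nat \<Rightarrow> nat \<Rightarrow> complex"
type_synonym rmat = "nat \<Rightarrow> nat \<Rightarrow> real"

definition dft2 :: "nat \<Rightarrow> cmat \<Rightarrow> cmat" where
  "dft2 N x = (\<lambda>k l. \<Sum>m<N. \<Sum>n<N.
      x m n * cis (- 2 * pi * (real k * real m + real l * real n) / real N))"

definition idft2 :: "nat \<Rightarrow> cmat \<Rightarrow> cmat" where
  "idft2 N X = (\<lambda>m n. (1 / of_nat (N^2)) * (\<Sum>k<N. \<Sum>l<N.
      X k l * cis (2 * pi * (real k * real m + real l * real n) / real N)))"

definition proj_blk :: "nat \<Rightarrow> cmat \<Rightarrow> cmat" where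
  "proj_blk M x = (\<lambda>m n. if m < M \<and> n < M then x m n else 0)"

definition clip_px :: "cmat \<Rightarrow> cmat" where
  "clip_px x = (\<lambda>m n. complex_of_real (max 0 (min 255 (Re (x m n)))))"

definition Qop :: "nat \<Rightarrow> nat \<Rightarrow> cmat \<Rightarrow> cmat" where
  "Qop N M h = dft2 N (clip_px (proj_blk M (idft2 N h)))"

definition frob_dist :: "nat \<Rightarrow> cmat \<Rightarrow> cmat \<Rightarrow> real" where
  "frob_dist N A B = sqrt (\<Sum>i<N. \<Sum>j<N. (cmod (A i j - B i j))^2)"

definition Sc :: "nat \<Rightarrow> complex set" where
  "Sc N = {z. \<bar>Re z\<bar> \<le> 255 * real N ^ 2 \<and> \<bar>Im z\<bar> \<le> 255 * real N ^ 2}"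

definition ScMat :: "nat \<Rightarrow> cmat set" where
  "ScMat N = {h. \<forall>i<N. \<forall>j<N. h i j \<in> Sc N}"

definition fmax :: "nat \<Rightarrow> (real \<Rightarrow> real) \<Rightarrow> real" where
  "fmax N f = Sup (f ` {- 255 * real N ^ 2 .. 255 * real N ^ 2})"

text \<open>One-bit quantised measurement: indicator(x > 0) - 1/2.\<close>
definition sgnbit :: "real \<Rightarrow> real" where
  "sgnbit x = (if x > 0 then 1 else 0) - 1/2"

end

theory Submission
  imports Defs
begin

lemma cis_ne1:
  assumes s: "s = 1 \<or> s = -1" and d: "d \<noteq> 0" "\<bar>d\<bar> < real N"
  shows "cis (s * (2*pi*d/real N)) \<noteq> 1"
proof
  assume "cis (s * (2*pi*d/real N)) = 1"
  hence "cos (s * (2*pi*d/real N)) = 1" by (metis cis.sel(1) one_complex.simps(1))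
  then obtain j :: int where j: "s * (2*pi*d/real N) = real_of_int j * 2 * pi"
    using cos_one_2pi_int by blast
  have N: "real N > 0" using d by linarith
  have "s * d = real_of_int j * real N" using j N
    by (simp add: field_simps)
  hence "\<bar>real_of_int j\<bar> * real N < 1 * real N" using s d
    by (auto simp: abs_mult)
  hence "\<bar>j\<bar> < 1" using N by (simp only: mult_less_cancel_right) auto
  hence "j = 0" by simp
  thus False using \<open>s * d = _\<close> s d by auto
qed

lemma orth:
  assumes s: "s = 1 \<or> s = -1" and "m < N" "m' < N"
  shows "(\<Sum>k<N. cis (s*(2*pi*(real k*real m)/real N)) * cnj (cis (s*(2*pi*(real k*real m')/real N))))
     = (if m = m' then of_nat N else 0)"
proof -
  define z where "z = cis (s*(2*pi*(real m - real m')/real N))"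
  have eq: "cis (s*(2*pi*(real k*real m)/real N)) * cnj (cis (s*(2*pi*(real k*real m')/real N))) = z ^ k" for k
  proof -
    have "s*(2*pi*(real k*real m)/real N) + - (s*(2*pi*(real k*real m')/real N)) = real k * (s*(2*pi*(real m - real m')/real N))"
      by (simp add: field_simps) (simp add: diff_divide_distrib)
    thus ?thesis unfolding z_def by (simp add: cis_cnj cis_mult Complex.DeMoivre)
  qed
  show ?thesis
  proof (cases "m = m'")
    case True
    hence "z = 1" by (simp add: z_def)
    thus ?thesis using True unfolding eq by simp
  next
    case False
    have "z \<noteq> 1" unfolding z_def using cis_ne1[OF s, of "real m - real m'" N] False assms by auto
    moreover have "z ^ N = 1"
    proof -
      have "z ^ N = cis (2 * pi * (s * (real m - real m')))" unfolding z_def Complex.DeMoivre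
        using assms by (simp add: field_simps of_nat_neq_0 del: of_nat_eq_0_iff) (simp add: field_simps diff_divide_distrib)
      also have "\<dots> = 1" apply (rule cis_multiple_2pi) using s by (auto simp: of_nat_diff)
      finally show ?thesis .
    qed
    ultimately show ?thesis using False unfolding eq by (simp add: sum_gp_strict)
  qed
qed

lemma parseval1:
  assumes s: "s = 1 \<or> s = -1"
  shows "(\<Sum>k<N. (cmod (\<Sum>m<N. v m * cis (s*(2*pi*(real k*real m)/real N))))^2)
       = real N * (\<Sum>m<N. (cmod (v m))^2)"
proof -
  define c where "c k m = cis (s*(2*pi*(real k*real m)/real N))" for k m :: nat
  have "complex_of_real (\<Sum>k<N. (cmod (\<Sum>m<N. v m * c k m))^2)
      = (\<Sum>k<N. (\<Sum>m<N. v m * c k m) * cnj (\<Sum>m'<N. v m' * c k m'))"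
    by (simp only: of_real_sum complex_norm_square)
  also have "\<dots> = (\<Sum>k<N. \<Sum>m<N. \<Sum>m'<N. v m * cnj (v m') * (c k m * cnj (c k m')))"
    by (simp add: cnj_sum sum_product mult_ac)
  also have "\<dots> = (\<Sum>m<N. \<Sum>m'<N. v m * cnj (v m') * (\<Sum>k<N. c k m * cnj (c k m')))"
  proof -
    have "(\<Sum>k<N. \<Sum>m<N. \<Sum>m'<N. v m * cnj (v m') * (c k m * cnj (c k m')))
        = (\<Sum>m<N. \<Sum>k<N. \<Sum>m'<N. v m * cnj (v m') * (c k m * cnj (c k m')))"
      by (rule sum.swap)
    also have "\<dots> = (\<Sum>m<N. \<Sum>m'<N. \<Sum>k<N. v m * cnj (v m') * (c k m * cnj (c k m')))"
      by (rule sum.cong[OF refl], rule sum.swap)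
    finally show ?thesis by (simp add: sum_distrib_left)
  qed
  also have "\<dots> = (\<Sum>m<N. \<Sum>m'<N. v m * cnj (v m') * (if m = m' then of_nat N else 0))"
    unfolding c_def by (intro sum.cong refl, subst orth[OF s]) auto
  also have "\<dots> = (\<Sum>m<N. v m * cnj (v m) * of_nat N)"
    by (simp add: if_distrib sum.delta cong: if_cong)
  also have "\<dots> = complex_of_real (real N * (\<Sum>m<N. (cmod (v m))^2))"
    by (simp add: sum_distrib_left mult_ac flip: complex_norm_square of_real_power)
  finally show ?thesis unfolding c_def of_real_eq_iff .
qed

definition fro :: "nat \<Rightarrow> (nat \<Rightarrow> nat \<Rightarrow> complex) \<Rightarrow> real" where
  "fro N A = (\<Sum>i<N. \<Sum>j<N. (cmod (A i j))^2)"

definition gft :: "real \<Rightarrow> nat \<Rightarrow> (nat \<Rightarrow> nat \<Rightarrow> complex) \<Rightarrow> (nat \<Rightarrow> nat \<Rightarrow> complex)" where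
  "gft s N x = (\<lambda>k l. \<Sum>m<N. \<Sum>n<N. x m n * cis (s*(2*pi*(real k*real m + real l*real n)/real N)))"

lemma parseval2:
  assumes s: "s = 1 \<or> s = -1"
  shows "fro N (gft s N x) = real N ^ 2 * fro N x"
proof -
  define c where "c k m = cis (s*(2*pi*(real k*real m)/real N))" for k m :: nat
  define w where "w l m = (\<Sum>n<N. x m n * c l n)" for l m
  have g: "gft s N x k l = (\<Sum>m<N. w l m * c k m)" for k l
  proof -
    have cc: "cis (s*(2*pi*(real k*real m + real l*real n)/real N)) = c k m * c l n" for m n
      unfolding c_def cis_mult by (rule arg_cong[where f=cis]) (simp add: field_simps add_divide_distrib)
    have "gft s N x k l = (\<Sum>m<N. \<Sum>n<N. x m n * (c k m * c l n))"
      unfolding gft_def by (simp only: cc)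
    thus ?thesis unfolding w_def by (simp add: sum_distrib_right sum_distrib_left mult_ac)
  qed
  have "fro N (gft s N x) = (\<Sum>k<N. \<Sum>l<N. (cmod (\<Sum>m<N. w l m * c k m))^2)"
    unfolding fro_def g ..
  also have "\<dots> = (\<Sum>l<N. \<Sum>k<N. (cmod (\<Sum>m<N. w l m * c k m))^2)"
    by (rule sum.swap)
  also have "\<dots> = (\<Sum>l<N. real N * (\<Sum>m<N. (cmod (w l m))^2))"
    unfolding c_def by (rule sum.cong[OF refl], rule parseval1[OF s])
  also have "\<dots> = real N * (\<Sum>m<N. \<Sum>l<N. (cmod (\<Sum>n<N. x m n * c l n))^2)"
    unfolding w_def sum_distrib_left by (rule sum.swap)
  also have "\<dots> = real N * (\<Sum>m<N. real N * (\<Sum>n<N. (cmod (x m n))^2))"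
    unfolding c_def by (subst parseval1[OF s]) simp
  also have "\<dots> = real N ^ 2 * fro N x"
    unfolding fro_def by (simp add: sum_distrib_left power2_eq_square mult.assoc)
  finally show ?thesis .
qed

lemma dft2_gft: "dft2 N x = gft (-1) N x"
  unfolding dft2_def gft_def by (intro ext sum.cong refl) (simp add: field_simps)

lemma idft2_gft: "idft2 N X = (\<lambda>m n. (1 / of_nat (N^2)) * gft 1 N X m n)"
  unfolding idft2_def gft_def by (intro ext arg_cong2[where f="(*)"] sum.cong refl) (simp add: field_simps)

lemma dft2_diff: "dft2 N (\<lambda>i j. a i j - b i j) k l = dft2 N a k l - dft2 N b k l"
  unfolding dft2_def by (simp add: sum_subtractf left_diff_distrib)

lemma idft2_diff: "idft2 N (\<lambda>i j. a i j - b i j) k l = idft2 N a k l - idft2 N b k l"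
  unfolding idft2_def by (simp add: sum_subtractf left_diff_distrib right_diff_distrib)

lemma fro_dft: "fro N (dft2 N x) = real N ^ 2 * fro N x"
  unfolding dft2_gft by (rule parseval2) simp

lemma fro_idft: assumes "0 < N" shows "fro N (idft2 N X) = fro N X / real N ^ 2"
proof -
  have "fro N (idft2 N X) = (1 / real N ^ 2)^2 * fro N (gft 1 N X)"
    unfolding fro_def idft2_gft by (simp add: norm_mult power_mult_distrib sum_distrib_left norm_divide norm_power power_divide)
  also have "\<dots> = fro N X / real N ^ 2" using assms by (simp add: parseval2 power2_eq_square)
  finally show ?thesis .
qed

lemma clip_proj_lip: "cmod (clip_px (proj_blk M a) i j - clip_px (proj_blk M b) i j) \<le> cmod (a i j - b i j)"
proof -
  have "cmod (clip_px (proj_blk M a) i j - clip_px (proj_blk M b) i j)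
     = \<bar>max 0 (min 255 (Re (proj_blk M a i j))) - max 0 (min 255 (Re (proj_blk M b i j)))\<bar>"
    unfolding clip_px_def by (simp flip: of_real_diff)
  also have "\<dots> \<le> \<bar>Re (proj_blk M a i j) - Re (proj_blk M b i j)\<bar>" by linarith
  also have "\<dots> \<le> cmod (a i j - b i j)" unfolding proj_blk_def
    using abs_Re_le_cmod[of "a i j - b i j"] by auto
  finally show ?thesis .
qed

lemma fro_mono: "(\<And>i j. i < N \<Longrightarrow> j < N \<Longrightarrow> cmod (A i j) \<le> cmod (B i j)) \<Longrightarrow> fro N A \<le> fro N B"
  unfolding fro_def by (intro sum_mono power_mono) auto

lemma Qop_lip: assumes "0 < N"
  shows "fro N (\<lambda>i j. Qop N M a i j - Qop N M b i j) \<le> fro N (\<lambda>i j. a i j - b i j)"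
proof -
  define u where "u c = clip_px (proj_blk M (idft2 N c))" for c
  have "(\<lambda>i j. Qop N M a i j - Qop N M b i j) = dft2 N (\<lambda>i j. u a i j - u b i j)"
    unfolding Qop_def u_def by (simp add: dft2_diff fun_eq_iff)
  hence "fro N (\<lambda>i j. Qop N M a i j - Qop N M b i j) = real N ^ 2 * fro N (\<lambda>i j. u a i j - u b i j)"
    by (simp add: fro_dft)
  also have "\<dots> \<le> real N ^ 2 * fro N (\<lambda>i j. idft2 N a i j - idft2 N b i j)"
    unfolding u_def by (intro mult_left_mono fro_mono clip_proj_lip) auto
  also have "(\<lambda>i j. idft2 N a i j - idft2 N b i j) = idft2 N (\<lambda>i j. a i j - b i j)"
    by (simp add: idft2_diff fun_eq_iff)
  also have "real N ^ 2 * fro N (idft2 N (\<lambda>i j. a i j - b i j)) = fro N (\<lambda>i j. a i j - b i j)"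
    using assms by (simp add: fro_idft)
  finally show ?thesis .
qed

lemma Qop_Sc: "Qop N M c i j \<in> Sc N"
proof -
  define u where "u = clip_px (proj_blk M (idft2 N c))"
  have u: "cmod (u m n) \<le> 255" for m n unfolding u_def clip_px_def by simp
  have "cmod (Qop N M c i j) = cmod (\<Sum>m<N. \<Sum>n<N. u m n * cis (- 2 * pi * (real i * real m + real j * real n) / real N))"
    unfolding Qop_def dft2_def u_def ..
  also have "\<dots> \<le> (\<Sum>m<N. cmod (\<Sum>n<N. u m n * cis (- 2 * pi * (real i * real m + real j * real n) / real N)))"
    by (rule norm_sum)
  also have "\<dots> \<le> (\<Sum>m<N. \<Sum>n<N. cmod (u m n * cis (- 2 * pi * (real i * real m + real j * real n) / real N)))"
    by (intro sum_mono norm_sum)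
  also have "\<dots> \<le> (\<Sum>m<N. \<Sum>n<N. 255)"
    by (intro sum_mono) (simp add: norm_mult u)
  also have "\<dots> = 255 * real N ^ 2" by (simp add: power2_eq_square)
  finally have c: "cmod (Qop N M c i j) \<le> 255 * real N ^ 2" .
  show ?thesis unfolding Sc_def using c abs_Re_le_cmod[of "Qop N M c i j"] abs_Im_le_cmod[of "Qop N M c i j"]
    by auto
qed

lemma frob_fro: "frob_dist N A B = sqrt (fro N (\<lambda>i j. A i j - B i j))"
  unfolding frob_dist_def fro_def ..

lemma main_gen:
  fixes F f :: "real \<Rightarrow> real" and \<gamma> :: real and P :: cmat and N M :: nat
  assumes Zdef: "Z = (\<lambda>h. Qop N M (\<lambda>i j. P i j + h i j
                - complex_of_real \<gamma> * (Complex (F (Re (h i j))) (F (Im (h i j))) - Complex (1/2) (1/2))))"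
    and N: "0 < N"
    and F_deriv: "\<forall>x. (F has_real_derivative f x) (at x)"
    and f_cont: "continuous_on UNIV f"
    and f_pos: "\<forall>x \<in> {- 255 * real N ^ 2 .. 255 * real N ^ 2}. 0 < f x"
    and g0: "0 < \<gamma>" and g2: "\<gamma> < 2 / fmax N f"
  shows "(\<forall>h \<in> ScMat N. Z h \<in> ScMat N) \<and>
        (\<exists>L. 0 \<le> L \<and> L < 1 \<and>
           (\<forall>h1 \<in> ScMat N. \<forall>h2 \<in> ScMat N. frob_dist N (Z h1) (Z h2) \<le> L * frob_dist N h1 h2))"
proof
  show "\<forall>h \<in> ScMat N. Z h \<in> ScMat N" unfolding Zdef ScMat_def using Qop_Sc by blast
next
  define B where "B = 255 * real N ^ 2"
  define I where "I = {-B..B}"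
  have B0: "0 \<le> B" unfolding B_def by simp
  have cI: "compact I" unfolding I_def by simp
  have neI: "I \<noteq> {}" unfolding I_def using B0 by simp
  have fI: "continuous_on I f" using f_cont continuous_on_subset by blast
  obtain x0 where x0: "x0 \<in> I" "\<And>y. y \<in> I \<Longrightarrow> f x0 \<le> f y"
    using continuous_attains_inf[OF cI neI fI] by blast
  have fpos: "\<And>x. x \<in> I \<Longrightarrow> 0 < f x" using f_pos unfolding I_def B_def by auto
  have bdd: "bdd_above (f ` I)"
    using compact_continuous_image[OF fI cI] by (intro bounded_imp_bdd_above compact_imp_bounded)
  have fmaxI: "fmax N f = Sup (f ` I)" unfolding fmax_def I_def B_def by simp
  have fle: "\<And>x. x \<in> I \<Longrightarrow> f x \<le> fmax N f" unfolding fmaxI using bdd by (intro cSup_upper) auto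
  define fm where "fm = f x0"
  define fM where "fM = fmax N f"
  have fm0: "0 < fm" unfolding fm_def using fpos x0 by auto
  have fmM: "fm \<le> fM" unfolding fm_def fM_def using fle x0 by auto
  have gM: "\<gamma> * fM < 2" using g2 fm0 fmM g0 unfolding fM_def by (simp add: field_simps)
  define L where "L = max (1 - \<gamma> * fm) (\<gamma> * fM - 1)"
  have L0: "0 \<le> L" unfolding L_def using fmM g0 mult_left_mono[OF fmM, of \<gamma>] by linarith
  have L1: "L < 1" unfolding L_def using gM g0 fm0 by (simp add: mult_pos_pos)
  define phi where "phi x = x - \<gamma> * F x" for x
  have dphi: "(phi has_real_derivative (1 - \<gamma> * f x)) (at x)" for x
    unfolding phi_def using F_deriv by (auto intro!: derivative_eq_intros)
  have lip0: "\<bar>phi b - phi a\<bar> \<le> L * \<bar>b - a\<bar>" if "a \<in> I" "b \<in> I" "a < b" for a b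
  proof -
    obtain z where z: "a < z" "z < b" "phi b - phi a = (b - a) * (1 - \<gamma> * f z)"
      using MVT2[OF \<open>a < b\<close>, of phi "\<lambda>x. 1 - \<gamma> * f x"] dphi by blast
    have zI: "z \<in> I" using that z unfolding I_def by auto
    have "fm \<le> f z" "f z \<le> fM" using x0 zI fle unfolding fm_def fM_def by auto
    hence "\<gamma> * fm \<le> \<gamma> * f z" "\<gamma> * f z \<le> \<gamma> * fM" using g0 by auto
    hence "\<bar>1 - \<gamma> * f z\<bar> \<le> L" unfolding L_def by linarith
    thus ?thesis unfolding z(3) using that by (simp add: abs_mult mult.commute mult_left_mono)
  qed
  have lip: "\<bar>phi b - phi a\<bar> \<le> L * \<bar>b - a\<bar>" if "a \<in> I" "b \<in> I" for a b
  proof -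
    consider "a < b" | "a = b" | "b < a" by linarith
    thus ?thesis
    proof cases
      case 3 thus ?thesis using lip0[OF that(2,1)] by (simp add: abs_minus_commute)
    qed (use lip0[OF that] L0 in auto)
  qed
  show "\<exists>L. 0 \<le> L \<and> L < 1 \<and>
           (\<forall>h1 \<in> ScMat N. \<forall>h2 \<in> ScMat N. frob_dist N (Z h1) (Z h2) \<le> L * frob_dist N h1 h2)"
  proof (intro exI conjI ballI)
    show "0 \<le> L" "L < 1" by fact+
    fix h1 h2 assume h1: "h1 \<in> ScMat N" and h2: "h2 \<in> ScMat N"
    define y where "y h = (\<lambda>i j. P i j + h i j
                - complex_of_real \<gamma> * (Complex (F (Re (h i j))) (F (Im (h i j))) - Complex (1/2) (1/2)))" for h :: cmat
    have Zy: "Z h = Qop N M (y h)" for h unfolding Zdef y_def ..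
    have pt: "cmod (y h1 i j - y h2 i j) \<le> L * cmod (h1 i j - h2 i j)" if "i < N" "j < N" for i j
    proof -
      have I1: "Re (h1 i j) \<in> I" "Im (h1 i j) \<in> I" "Re (h2 i j) \<in> I" "Im (h2 i j) \<in> I"
      proof -
        have "h1 i j \<in> Sc N" "h2 i j \<in> Sc N" using h1 h2 that unfolding ScMat_def by auto
        hence "\<bar>Re (h1 i j)\<bar> \<le> B" "\<bar>Im (h1 i j)\<bar> \<le> B" "\<bar>Re (h2 i j)\<bar> \<le> B" "\<bar>Im (h2 i j)\<bar> \<le> B"
          unfolding Sc_def B_def by auto
        thus "Re (h1 i j) \<in> I" "Im (h1 i j) \<in> I" "Re (h2 i j) \<in> I" "Im (h2 i j) \<in> I"
          unfolding I_def by (auto simp: abs_le_iff)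
      qed
      have re: "Re (y h1 i j - y h2 i j) = phi (Re (h1 i j)) - phi (Re (h2 i j))"
        unfolding y_def phi_def by (simp add: algebra_simps)
      have im: "Im (y h1 i j - y h2 i j) = phi (Im (h1 i j)) - phi (Im (h2 i j))"
        unfolding y_def phi_def by (simp add: algebra_simps)
      have a: "(Re (y h1 i j - y h2 i j))^2 \<le> (L * \<bar>Re (h1 i j) - Re (h2 i j)\<bar>)^2"
        unfolding re using lip[OF I1(3,1)] by (subst power2_abs[symmetric], intro power_mono) auto
      have b: "(Im (y h1 i j - y h2 i j))^2 \<le> (L * \<bar>Im (h1 i j) - Im (h2 i j)\<bar>)^2"
        unfolding im using lip[OF I1(4,2)] by (subst power2_abs[symmetric], intro power_mono) auto
      have "cmod (y h1 i j - y h2 i j) = sqrt ((Re (y h1 i j - y h2 i j))^2 + (Im (y h1 i j - y h2 i j))^2)"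
        by (simp add: cmod_def)
      also have "\<dots> \<le> sqrt (L^2 * ((Re (h1 i j - h2 i j))^2 + (Im (h1 i j - h2 i j))^2))"
        using a b by (intro real_sqrt_le_mono) (simp add: power_mult_distrib algebra_simps)
      also have "\<dots> = L * cmod (h1 i j - h2 i j)"
        using L0 by (simp add: real_sqrt_mult cmod_def)
      finally show ?thesis .
    qed
    have "fro N (\<lambda>i j. y h1 i j - y h2 i j) \<le> fro N (\<lambda>i j. complex_of_real L * (h1 i j - h2 i j))"
      using pt L0 by (intro fro_mono) (simp add: norm_mult)
    also have "\<dots> = L^2 * fro N (\<lambda>i j. h1 i j - h2 i j)"
      unfolding fro_def by (simp add: norm_mult power_mult_distrib sum_distrib_left)
    finally have fy: "fro N (\<lambda>i j. y h1 i j - y h2 i j) \<le> L^2 * fro N (\<lambda>i j. h1 i j - h2 i j)" .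
    have "frob_dist N (Z h1) (Z h2) = sqrt (fro N (\<lambda>i j. Qop N M (y h1) i j - Qop N M (y h2) i j))"
      unfolding frob_fro Zy ..
    also have "\<dots> \<le> sqrt (fro N (\<lambda>i j. y h1 i j - y h2 i j))"
      by (intro real_sqrt_le_mono Qop_lip N)
    also have "\<dots> \<le> sqrt (L^2 * fro N (\<lambda>i j. h1 i j - h2 i j))"
      by (intro real_sqrt_le_mono fy)
    also have "\<dots> = L * frob_dist N h1 h2"
      unfolding frob_fro using L0 by (simp add: real_sqrt_mult)
    finally show "frob_dist N (Z h1) (Z h2) \<le> L * frob_dist N h1 h2" .
  qed
qed

theorem lemma5:
  fixes M N :: nat
    and g :: rmat                   \<comment> \<open>image (zero padded)\<close>
    and WR WI dR dI :: rmat         \<comment> \<open>realisations of noise and dither\<close>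
    and F f :: "real \<Rightarrow> real"       \<comment> \<open>CDF and PDF of the total noise\<close>
    and \<gamma> :: real
  assumes "0 < M" and "2 * M < N"
    and g_range: "\<forall>i<M. \<forall>j<M. 0 \<le> g i j \<and> g i j \<le> 255"
    and g_pad: "\<forall>i j. \<not> (i < M \<and> j < M) \<longrightarrow> g i j = 0"
    and F_mono: "mono F"
    and F_bot: "(F \<longlongrightarrow> 0) at_bot" and F_top: "(F \<longlongrightarrow> 1) at_top"
    and F_symm: "\<forall>x. F (- x) = 1 - F x"
    and F_deriv: "\<forall>x. (F has_real_derivative f x) (at x)"
    and f_cont: "continuous_on UNIV f"
    and f_nonneg: "\<forall>x. 0 \<le> f x"
    and f_pos: "\<forall>x \<in> {- 255 * real N ^ 2 .. 255 * real N ^ 2}. 0 < f x"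
    and \<gamma>_range: "0 < \<gamma>" "\<gamma> < 2 / fmax N f"
  shows
    "let gt = dft2 N (\<lambda>i j. complex_of_real (g i j));
         XR = (\<lambda>i j. sgnbit (Re (gt i j) + WR i j + dR i j));
         XI = (\<lambda>i j. sgnbit (Im (gt i j) + WI i j + dI i j));
         Z = (\<lambda>h. Qop N M (\<lambda>i j.
                complex_of_real \<gamma> * Complex (XR i j) (XI i j) + h i j
                - complex_of_real \<gamma> * (Complex (F (Re (h i j))) (F (Im (h i j))) - Complex (1/2) (1/2))))
     in (\<forall>h \<in> ScMat N. Z h \<in> ScMat N) \<and>
        (\<exists>L. 0 \<le> L \<and> L < 1 \<and>
           (\<forall>h1 \<in> ScMat N. \<forall>h2 \<in> ScMat N. frob_dist N (Z h1) (Z h2) \<le> L * frob_dist N h1 h2))"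
  unfolding Let_def
  by (rule main_gen[OF refl _ F_deriv f_cont f_pos \<gamma>_range]) (use assms(2) in simp)

end
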